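(* Let $(n_i)_{i\in\mathbb{Z}}$ be any sequence of positive integers and let $A_i=\begin{pmatrix}1&0\\ n_i&1\end{pmatrix}$ for $i$ even and $A_i=\begin{pmatrix}1&n_i\\ 0&1\end{pmatrix}$ for $i$ odd, each acting on the 2-torus $M_i=\mathbb{T}^2=\mathbb{R}^2/\mathbb{Z}^2$ (with the flat metric inherited from $\mathbb{R}^2$) by multiplication on column vectors, $A_i:M_i\to M_{i+1}$. Then the family $(A_i)_{i\in\mathbb{Z}}$ is an Anosov family with constants $\lambda=\sqrt{2/3}$ and $2c$, where $c$ is the constant defined below; i.e. for all $i\in\mathbb{Z}$ and $n\ge 1$, $\|A_i^n s_i\|\le 2c\lambda^n\|s_i\|$ and $\|A_i^n u_i\|\ge (2c)^{-1}\lambda^{-n}\|u_i\|$, with stable subspaces spanned by $s_i$ and unstable subspaces spanned by $u_i$.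
   Context: For a sequence of positive integers, $[m_1m_2m_3\ldots]$ denotes the continued fraction $\frac{1}{m_1+\frac{1}{m_2+\cdots}}$. Here $A_i^n=A_{i+n-1}\cdots A_{i+1}A_i$. For each $i$, let $s_i=(a_i,b_i)$, $u_i=(c_i,d_i)$ and $\lambda_i\in(0,1)$ be given by: $a_id_i+c_ib_i=1$, and for $i$ even $a_i=[n_in_{i+1}\ldots]$, $b_i=1$, $d_i/c_i=[n_{i-1}n_{i-2}\ldots]$, $\lambda_i=a_i$; for $i$ odd $b_i=[n_in_{i+1}\ldots]$, $a_i=1$, $c_i/d_i=[n_{i-1}n_{i-2}\ldots]$, $\lambda_i=b_i$. Set $c=\max\{\sup_{i,j}\|s_i\|/\|s_j\|,\ \sup_{i,j}\|u_i\|/\|u_j\|\}$ (Euclidean norms). An Anosov family on a sequence of compact Riemannian manifolds $(M_i)$ with diffeomorphisms $f_i:M_i\to M_{i+1}$ is one for which the tangent bundle has a continuous $Df$-invariant splitting $E^s\oplus E^u$ and there are $\lambda\in(0,1)$, $c'>0$ with $\|D(f_{i+n-1}\circ\cdots\circ f_i)v\|\le c'\lambda^n\|v\|$ for $v\in E^s$ and $\|D(f_{i-n}^{-1}\circ\cdots\circ f_{i-1}^{-1})v\|\le c'\lambda^n\|v\|$ for $v\in E^u$, for all $i\in\mathbb{Z}$, $n\ge1$. *)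

theory Defs
  imports "HOL-Analysis.Analysis"
begin

text \<open>Finite truncations of the continued fraction [m_0 m_1 m_2 ...] = 1/(m_0 + 1/(m_1 + ...)).\<close>
primrec cf_fin :: "(nat \<Rightarrow> nat) \<Rightarrow> nat \<Rightarrow> real" where
  "cf_fin m 0 = 0"
| "cf_fin m (Suc k) = 1 / (real (m 0) + cf_fin (\<lambda>j. m (Suc j)) k)"

definition cf :: "(nat \<Rightarrow> nat) \<Rightarrow> real" where
  "cf m = lim (\<lambda>k. cf_fin m k)"

definition Amat :: "(int \<Rightarrow> nat) \<Rightarrow> int \<Rightarrow> real^2^2" where
  "Amat n i = (if even i then vector [vector [1, 0], vector [real (n i), 1]]
               else vector [vector [1, real (n i)], vector [0, 1]])"

primrec Apow :: "(int \<Rightarrow> nat) \<Rightarrow> int \<Rightarrow> nat \<Rightarrow> real^2^2" where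
  "Apow n i 0 = mat 1"
| "Apow n i (Suc k) = Amat n (i + int k) ** Apow n i k"

definition fwd :: "(int \<Rightarrow> nat) \<Rightarrow> int \<Rightarrow> real" where
  "fwd n i = cf (\<lambda>j. n (i + int j))"

definition bwd :: "(int \<Rightarrow> nat) \<Rightarrow> int \<Rightarrow> real" where
  "bwd n i = cf (\<lambda>j. n (i - 1 - int j))"

text \<open>Stable vector: s_i = (a_i, -b_i) (sign convention making A_i s_i parallel to s_{i+1}
  and a_i d_i + c_i b_i = det(s_i, u_i) = 1).\<close>
definition svec :: "(int \<Rightarrow> nat) \<Rightarrow> int \<Rightarrow> real^2" where
  "svec n i = (if even i then vector [fwd n i, -1] else vector [1, - fwd n i])"

text \<open>u_i = (c_i, d_i), determined by a_i d_i + c_i b_i = 1 and the ratio condition: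
  i even: d_i/c_i = bwd, so c_i = 1/(1 + a_i bwd), d_i = bwd/(1 + a_i bwd);
  i odd:  c_i/d_i = bwd, so d_i = 1/(1 + b_i bwd), c_i = bwd/(1 + b_i bwd).\<close>
definition uvec :: "(int \<Rightarrow> nat) \<Rightarrow> int \<Rightarrow> real^2" where
  "uvec n i = (if even i
     then vector [1 / (1 + fwd n i * bwd n i), bwd n i / (1 + fwd n i * bwd n i)]
     else vector [bwd n i / (1 + fwd n i * bwd n i), 1 / (1 + fwd n i * bwd n i)])"

definition cconst :: "(int \<Rightarrow> nat) \<Rightarrow> real" where
  "cconst n = max (Sup {norm (svec n i) / norm (svec n j) | i j. True})
                  (Sup {norm (uvec n i) / norm (uvec n j) | i j. True})"

end

theory Submission
  imports Defs
begin

lemma cf_fin_bounds: "(\<And>j. m j > 0) \<Longrightarrow> 0 \<le> cf_fin m k \<and> cf_fin m k \<le> 1"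
proof (induction k arbitrary: m)
  case 0 then show ?case by simp
next
  case (Suc k)
  have h: "0 \<le> cf_fin (\<lambda>j. m (Suc j)) k" using Suc by auto
  have "real (m 0) \<ge> 1" using Suc.prems[of 0] by simp
  then show ?case using h by (simp add: divide_simps)
qed

lemma g1: fixes a t s :: real assumes "a \<ge> 1" "0 \<le> t" "0 \<le> s"
  shows "\<bar>1/(a+t) - 1/(a+s)\<bar> \<le> \<bar>t - s\<bar>"
proof -
  have e: "1/(a+t) - 1/(a+s) = (s - t)/((a+t)*(a+s))" using assms by (simp add: field_simps)
  have p: "1*1 \<le> (a+t)*(a+s)" by (rule mult_mono) (use assms in auto)
  have "\<bar>s - t\<bar> * 1 \<le> \<bar>s - t\<bar> * ((a+t)*(a+s))"
    using p by (intro mult_left_mono) auto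
  then show ?thesis unfolding e using p
    by (simp add: abs_div divide_le_eq abs_minus_commute)
qed

lemma g2: fixes a b t s :: real assumes "a \<ge> 1" "b \<ge> 1" "0 \<le> t" "0 \<le> s"
  shows "\<bar>1/(a+1/(b+t)) - 1/(a+1/(b+s))\<bar> \<le> \<bar>t - s\<bar> / 4"
proof -
  have bt: "b + t > 0" "b+s>0" using assms by linarith+
  have p1: "1*1 \<le> a*(b+t)" by (rule mult_mono) (use assms in auto)
  have p2: "1*1 \<le> a*(b+s)" by (rule mult_mono) (use assms in auto)
  have q1: "a + 1/(b+t) = (a*(b+t)+1)/(b+t)" "a + 1/(b+s) = (a*(b+s)+1)/(b+s)"
    using bt by (simp_all add: field_simps)
  have r: "1/(a+1/(b+t)) = (b+t)/(a*(b+t)+1)" "1/(a+1/(b+s)) = (b+s)/(a*(b+s)+1)"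
    unfolding q1 by simp_all
  have e: "(b+t)/(a*(b+t)+1) - (b+s)/(a*(b+s)+1) = (t - s)/((a*(b+t)+1)*(a*(b+s)+1))"
    using p1 p2 by (simp add: divide_simps) (simp add: algebra_simps)
  have p: "2*2 \<le> (a*(b+t)+1)*(a*(b+s)+1)" by (rule mult_mono) (use p1 p2 in auto)
  have "\<bar>t - s\<bar> * 4 \<le> \<bar>t - s\<bar> * ((a*(b+t)+1)*(a*(b+s)+1))"
    using p by (intro mult_left_mono) auto
  then show ?thesis unfolding r e using p
    by (simp add: abs_div divide_simps)
qed

lemma cf_cauchy: assumes "\<And>j. m j > 0"
  shows "\<bar>cf_fin m (k+j) - cf_fin m k\<bar> \<le> 2*(1/2)^k"
  using assms
proof (induction k arbitrary: m j rule: less_induct)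
  case (less k)
  show ?case
  proof (cases k)
    case 0
    then show ?thesis using cf_fin_bounds[of m j] less.prems by auto
  next
    case (Suc k1)
    note k1 = Suc
    show ?thesis
    proof (cases k1)
      case 0
      have t: "0 \<le> cf_fin (\<lambda>j. m (Suc j)) j" using cf_fin_bounds[of "\<lambda>j. m (Suc j)" j] less.prems by auto
      have t1: "cf_fin (\<lambda>j. m (Suc j)) j \<le> 1" using cf_fin_bounds[of "\<lambda>j. m (Suc j)" j] less.prems by auto
      have "real (m 0) \<ge> 1" using less.prems[of 0] by simp
      from g1[OF this t order_refl]
      have "\<bar>1/(real (m 0) + cf_fin (\<lambda>j. m (Suc j)) j) - 1/(real (m 0) + 0)\<bar> \<le> 1"
        using t t1 by simp
      then show ?thesis using k1 0 by simp
    next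
      case (Suc k2)
      define m2 where "m2 = (\<lambda>j. m (Suc (Suc j)))"
      have pos2: "\<And>j. m2 j > 0" using less.prems by (simp add: m2_def)
      have IH: "\<bar>cf_fin m2 (k2+j) - cf_fin m2 k2\<bar> \<le> 2*(1/2)^k2"
        using less.IH[of k2 m2 j] pos2 k1 Suc by simp
      have a: "real (m 0) \<ge> 1" using less.prems[of 0] by simp
      have b: "real (m 1) \<ge> 1" using less.prems[of 1] by simp
      have t: "0 \<le> cf_fin m2 (k2+j)" "0 \<le> cf_fin m2 k2"
        using cf_fin_bounds[OF pos2] by auto
      have "\<bar>1/(real (m 0)+1/(real (m 1)+cf_fin m2 (k2+j))) - 1/(real (m 0)+1/(real (m 1)+cf_fin m2 k2))\<bar>
            \<le> \<bar>cf_fin m2 (k2+j) - cf_fin m2 k2\<bar> / 4"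
        by (rule g2[OF a b t])
      also have "\<dots> \<le> 2*(1/2)^k2 / 4" using IH by simp
      also have "\<dots> = 2*(1/2)^k" using k1 Suc by simp
      finally show ?thesis using k1 Suc by (simp add: m2_def)
    qed
  qed
qed

lemma cf_conv: assumes pos: "\<And>j. m j > 0"
  shows "(\<lambda>k. cf_fin m k) \<longlonglongrightarrow> cf m"
proof -
  have "Cauchy (\<lambda>k. cf_fin m k)"
  proof (rule metric_CauchyI)
    fix e :: real assume e: "e > 0"
    obtain M where M: "(1/2::real)^M < e/4" using real_arch_pow_inv[of "e/4" "1/2"] e by auto
    have "\<forall>a\<ge>M. \<forall>b\<ge>M. dist (cf_fin m a) (cf_fin m b) < e"
    proof (intro allI impI)
      fix a b assume ab: "a \<ge> M" "b \<ge> M"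
      have 1: "\<bar>cf_fin m (M+(a-M)) - cf_fin m M\<bar> \<le> 2*(1/2)^M" by (rule cf_cauchy[OF pos])
      have 2: "\<bar>cf_fin m (M+(b-M)) - cf_fin m M\<bar> \<le> 2*(1/2)^M" by (rule cf_cauchy[OF pos])
      have "\<bar>cf_fin m a - cf_fin m M\<bar> \<le> 2*(1/2)^M" "\<bar>cf_fin m b - cf_fin m M\<bar> \<le> 2*(1/2)^M"
        using 1 2 ab by simp_all
      then show "dist (cf_fin m a) (cf_fin m b) < e" using M unfolding dist_real_def by linarith
    qed
    then show "\<exists>M. \<forall>a\<ge>M. \<forall>b\<ge>M. dist (cf_fin m a) (cf_fin m b) < e" by blast
  qed
  then show ?thesis unfolding cf_def by (simp add: Cauchy_convergent_iff convergent_LIMSEQ_iff)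
qed

lemma cf_bounds: assumes pos: "\<And>j. m j > 0" shows "0 \<le> cf m" "cf m \<le> 1"
proof -
  show "0 \<le> cf m" by (rule LIMSEQ_le_const[OF cf_conv[OF pos]]) (use cf_fin_bounds[OF pos] in auto)
  show "cf m \<le> 1" by (rule LIMSEQ_le_const2[OF cf_conv[OF pos]]) (use cf_fin_bounds[OF pos] in auto)
qed

lemma cf_rec: assumes pos: "\<And>j. m j > 0"
  shows "cf m = 1 / (real (m 0) + cf (\<lambda>j. m (Suc j)))"
proof -
  have pos': "\<And>j. m (Suc j) > 0" using pos by simp
  have a: "(\<lambda>k. cf_fin m (Suc k)) \<longlonglongrightarrow> cf m" using LIMSEQ_Suc[OF cf_conv[OF pos]] .
  have nz: "real (m 0) + cf (\<lambda>j. m (Suc j)) \<noteq> 0" using cf_bounds(1)[of "\<lambda>j. m (Suc j)", OF pos'] pos[of 0] by linarith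
  have b: "(\<lambda>k. 1 / (real (m 0) + cf_fin (\<lambda>j. m (Suc j)) k)) \<longlonglongrightarrow> 1 / (real (m 0) + cf (\<lambda>j. m (Suc j)))"
    by (intro tendsto_intros cf_conv[of "\<lambda>j. m (Suc j)", OF pos'] nz)
  show ?thesis using LIMSEQ_unique[OF a] b by simp
qed

lemma fwd_rec: assumes pos: "\<And>i. n i > 0"
  shows "fwd n i = 1 / (real (n i) + fwd n (i+1))"
proof -
  have e: "(\<lambda>j. n (i + int (Suc j))) = (\<lambda>j. n (i + 1 + int j))" by (simp add: add.assoc)
  have 1: "cf (\<lambda>j. n (i + int j)) = 1 / (real (n (i + int 0)) + cf (\<lambda>j. n (i + int (Suc j))))"
    by (rule cf_rec) (simp add: pos)
  show ?thesis unfolding fwd_def using 1 unfolding e by simp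
qed

lemma bwd_rec: assumes pos: "\<And>i. n i > 0"
  shows "bwd n (i+1) = 1 / (real (n i) + bwd n i)"
proof -
  have e: "(\<lambda>j. n (i + 1 - 1 - int (Suc j))) = (\<lambda>j. n (i - 1 - int j))" by (simp add: algebra_simps)
  have 1: "cf (\<lambda>j. n (i + 1 - 1 - int j)) = 1 / (real (n (i + 1 - 1 - int 0)) + cf (\<lambda>j. n (i + 1 - 1 - int (Suc j))))"
    by (rule cf_rec) (simp add: pos)
  show ?thesis unfolding bwd_def using 1 unfolding e by simp
qed

lemma fwd_bounds: assumes pos: "\<And>i. n i > 0" shows "0 < fwd n i" "fwd n i \<le> 1"
proof -
  have p: "\<And>j. n (i + int j) > 0" using pos by simp
  have p1: "\<And>j. n (i + 1 + int j) > 0" using pos by simp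
  show "fwd n i \<le> 1" unfolding fwd_def by (rule cf_bounds(2)[OF p])
  have "fwd n (i+1) \<ge> 0" unfolding fwd_def by (rule cf_bounds(1)[OF p1])
  then show "0 < fwd n i" using fwd_rec[of n i, OF pos] pos[of i] by simp
qed

lemma bwd_bounds: assumes pos: "\<And>i. n i > 0" shows "0 < bwd n i" "bwd n i \<le> 1"
proof -
  have p: "\<And>j. n (i - 1 - int j) > 0" using pos by simp
  have p1: "\<And>j. n (i - 1 - 1 - int j) > 0" using pos by simp
  show "bwd n i \<le> 1" unfolding bwd_def by (rule cf_bounds(2)[OF p])
  have "bwd n (i-1) \<ge> 0" unfolding bwd_def by (rule cf_bounds(1)[OF p1])
  then show "0 < bwd n i" using bwd_rec[of n "i-1", OF pos] pos[of "i-1"] by simp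
qed

lemma Amat_mult: "Amat n i *v vector [a,b] =
   (if even i then vector [a, real (n i) * a + b] else vector [a + real (n i) * b, b])"
  by (auto simp: vec_eq_iff forall_2 matrix_vector_mult_def sum_2 Amat_def)

lemma svec_step: assumes pos: "\<And>i. n i > 0"
  shows "Amat n i *v svec n i = fwd n i *\<^sub>R svec n (i+1)"
proof -
  have h: "fwd n i * (real (n i) + fwd n (i+1)) = 1"
    using fwd_rec[of n i, OF pos] fwd_bounds[of n "i+1", OF pos] by (simp add: field_simps)
  then have h': "real (n i) * fwd n i - 1 = - (fwd n i * fwd n (i+1))" by (simp add: algebra_simps)
  have h'': "1 - real (n i) * fwd n i = fwd n i * fwd n (i+1)" using h by (simp add: algebra_simps)
  show ?thesis
    by (auto simp: svec_def Amat_mult vec_eq_iff forall_2 h' h'')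
qed

lemma uvec_step: assumes pos: "\<And>i. n i > 0"
  shows "Amat n i *v uvec n i = (1 / fwd n i) *\<^sub>R uvec n (i+1)"
proof -
  define x where "x = fwd n i"
  define x' where "x' = fwd n (i+1)"
  define y where "y = bwd n i"
  define y' where "y' = bwd n (i+1)"
  define N where "N = real (n i)"
  have x: "0 < x" "x \<le> 1" using fwd_bounds[of n i, OF pos] x_def by auto
  have y: "0 < y" "y \<le> 1" using bwd_bounds[of n i, OF pos] y_def by auto
  have N: "N \<ge> 1" using pos[of i] N_def by simp
  have x'0: "x' \<ge> 0" using fwd_bounds[of n "i+1", OF pos] x'_def by auto
  have r: "x = 1 / (N + x')" using fwd_rec[of n i, OF pos] by (simp add: x_def x'_def N_def)
  have hxx: "x * (N + x') = 1" unfolding r using N x'0 by simp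
  then have hx: "x' = (1 - N * x) / x" using x by (simp add: field_simps)
  have hy: "y' = 1 / (N + y)" using bwd_rec[of n i, OF pos] by (simp add: y_def y'_def N_def)
  have Ny: "N + y > 0" using N y by simp
  have xNy1: "x*(N+y) > 0" using x Ny by simp
  have xNy: "x*(N+y) > 0" "N*x + x*y > 0" using xNy1 by (simp_all add: algebra_simps)
  have D: "1 + x*y > 0" using x y by (simp add: add_pos_pos)
  have D': "1 + x' * y' = (1 + x*y) / (x * (N+y))" unfolding hx hy using x Ny xNy by (simp add: field_simps)
  have xD1: "x*(1+x*y) > 0" using x D by simp
  have xD: "x + x*(x*y) > 0" using xD1 by (simp add: algebra_simps)
  have D'p: "1 + x' * y' > 0" unfolding D' using D x Ny by simp
  have e1: "1 / x * (y' / (1 + x' * y')) = 1 / (1 + x*y)" unfolding D' hy using x Ny D xNy hxx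
    by (simp add: field_simps)
  have e2: "1 / x * (1 / (1 + x' * y')) = (N + y) / (1 + x*y)" unfolding D' using x Ny D xNy xD
    by (simp add: field_simps)
  have e3: "N * (1 / (1 + x * y)) + y / (1 + x * y) = (N+y)/(1+x*y)" by (simp add: add_divide_distrib)
  have e1': "y' / ((1 + x' * y') * x) = 1/(1+x*y)" using e1 by (simp add: mult.commute)
  have e2': "1 / ((1 + x' * y') * x) = (N + y) / (1 + x*y)" using e2 by (simp add: mult.commute)
  show ?thesis
  proof (cases "even i")
    case True
    have u: "uvec n i = vector [1/(1+x*y), y/(1+x*y)]" using True by (simp add: uvec_def x_def y_def)
    have u': "uvec n (i+1) = vector [y'/(1+x'*y'), 1/(1+x'*y')]" using True by (simp add: uvec_def x'_def y'_def)
    show ?thesis unfolding u u' Amat_mult using True e3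
      by (simp add: vec_eq_iff forall_2 N_def[symmetric] x_def[symmetric] e1' e2')
  next
    case False
    have u: "uvec n i = vector [y/(1+x*y), 1/(1+x*y)]" using False by (simp add: uvec_def x_def y_def)
    have u': "uvec n (i+1) = vector [1/(1+x'*y'), y'/(1+x'*y')]" using False by (simp add: uvec_def x'_def y'_def)
    show ?thesis unfolding u u' Amat_mult using False e3
      by (simp add: vec_eq_iff forall_2 N_def[symmetric] x_def[symmetric] e1' e2' add.commute)
  qed
qed

lemma indep2: fixes s u :: "real^2" assumes d: "s$1*u$2 - s$2*u$1 = 1"
  shows "independent {s,u}" "s \<noteq> u"
proof -
  show su: "s \<noteq> u" using d by auto
  have u0: "u \<noteq> 0" using d by auto
  have ns: "s \<notin> span {u}"
  proof
    assume "s \<in> span {u}"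
    then obtain k where "s = k *\<^sub>R u" by (auto simp: span_singleton)
    then show False using d by (simp add: algebra_simps)
  qed
  have "independent {u}" using u0 by (simp add: independent_insert)
  then show "independent {s,u}" using su ns by (simp add: independent_insert)
qed

lemma det_su: assumes pos: "\<And>i. n i > 0"
  shows "svec n i $1 * uvec n i $2 - svec n i $2 * uvec n i $1 = 1"
proof -
  have "1 + fwd n i * bwd n i > 0" using fwd_bounds[of n i, OF pos] bwd_bounds[of n i, OF pos]
    by (simp add: add_pos_pos)
  then show ?thesis by (simp add: svec_def uvec_def field_simps)
qed

lemma Apow_s: assumes pos: "\<And>i. n i > 0"
  shows "Apow n i k *v svec n i = (\<Prod>j<k. fwd n (i + int j)) *\<^sub>R svec n (i + int k)"
proof (induction k)
  case 0 then show ?case by simp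
next
  case (Suc k)
  have eqi: "i + int k + 1 = i + int (Suc k)" by simp
  have "Apow n i (Suc k) *v svec n i = Amat n (i + int k) *v (Apow n i k *v svec n i)"
    by (simp add: matrix_vector_mul_assoc)
  also have "\<dots> = (\<Prod>j<k. fwd n (i + int j)) *\<^sub>R (fwd n (i + int k) *\<^sub>R svec n (i + int (Suc k)))"
    unfolding Suc.IH matrix_vector_mult_scaleR svec_step[OF pos] eqi ..
  also have "\<dots> = (\<Prod>j<Suc k. fwd n (i + int j)) *\<^sub>R svec n (i + int (Suc k))"
    by (simp only: scaleR_scaleR prod.lessThan_Suc)
  finally show ?case .
qed

lemma Apow_u: assumes pos: "\<And>i. n i > 0"
  shows "Apow n i k *v uvec n i = (1 / (\<Prod>j<k. fwd n (i + int j))) *\<^sub>R uvec n (i + int k)"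
proof (induction k)
  case 0 then show ?case by simp
next
  case (Suc k)
  have eqi: "i + int k + 1 = i + int (Suc k)" by simp
  have "Apow n i (Suc k) *v uvec n i = Amat n (i + int k) *v (Apow n i k *v uvec n i)"
    by (simp add: matrix_vector_mul_assoc)
  also have "\<dots> = (1 / (\<Prod>j<k. fwd n (i + int j))) *\<^sub>R ((1 / fwd n (i + int k)) *\<^sub>R uvec n (i + int (Suc k)))"
    unfolding Suc.IH matrix_vector_mult_scaleR uvec_step[OF pos] eqi ..
  also have "\<dots> = (1 / (\<Prod>j<Suc k. fwd n (i + int j))) *\<^sub>R uvec n (i + int (Suc k))"
    by (simp only: scaleR_scaleR prod.lessThan_Suc) simp
  finally show ?case .
qed

lemma pair_bound: assumes pos: "\<And>i. n i > 0"
  shows "fwd n j * fwd n (j+1) \<le> 1/2"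
proof -
  define x where "x = fwd n j"
  define x' where "x' = fwd n (j+1)"
  have x: "0 < x" "x \<le> 1" using fwd_bounds[of n j, OF pos] x_def by auto
  have x': "0 < x'" "x' \<le> 1" using fwd_bounds[of n "j+1", OF pos] x'_def by auto
  have N: "real (n j) \<ge> 1" using pos[of j] by simp
  have r: "x = 1 / (real (n j) + x')" using fwd_rec[of n j, OF pos] by (simp add: x_def x'_def)
  have h: "x * (real (n j) + x') = 1" unfolding r using N x' by simp
  have xN: "x * 1 \<le> x * real (n j)" using N x by (intro mult_left_mono) auto
  have a: "x * x' \<le> 1 - x" using h xN by (simp add: algebra_simps)
  have b: "x * x' \<le> x" using x x' by (simp add: mult_left_le)
  show ?thesis using a b unfolding x_def[symmetric] x'_def[symmetric] by linarith
qed

lemma prod_nonneg_f: assumes pos: "\<And>i. n i > 0"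
  shows "0 < (\<Prod>j<k. fwd n (i + int j))"
  by (rule prod_pos) (use fwd_bounds(1)[OF pos] in auto)

lemma prod_bound: assumes pos: "\<And>i. n i > 0"
  shows "(\<Prod>j<k. fwd n (i + int j)) \<le> 2 * sqrt (2/3) ^ k"
proof (induction k rule: less_induct)
  case (less k)
  show ?case
  proof (cases k)
    case 0 then show ?thesis by simp
  next
    case (Suc k1)
    show ?thesis
    proof (cases k1)
      case 0
      have "(1/2::real)^2 \<le> 2/3" by (simp add: power2_eq_square)
      then have "1/2 \<le> sqrt (2/3::real)" by (rule real_le_rsqrt)
      then have "2 * sqrt (2/3) \<ge> (1::real)" by linarith
      then show ?thesis using Suc 0 fwd_bounds(2)[of n i, OF pos] by simp
    next
      case (Suc k2)
      have k: "k = Suc (Suc k2)" using Suc \<open>k = Suc k1\<close> by simp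
      have IH: "(\<Prod>j<k2. fwd n (i + int j)) \<le> 2 * sqrt (2/3) ^ k2" using less.IH[of k2] k by simp
      have eqi: "i + int k2 + 1 = i + int (Suc k2)" by simp
      have pb: "fwd n (i + int k2) * fwd n (i + int (Suc k2)) \<le> 1/2"
        using pair_bound[of n "i + int k2", OF pos] unfolding eqi .
      have e: "(\<Prod>j<k. fwd n (i + int j)) = (\<Prod>j<k2. fwd n (i + int j)) * (fwd n (i + int k2) * fwd n (i + int (Suc k2)))"
        unfolding k by (simp only: prod.lessThan_Suc mult.assoc)
      have nn: "0 \<le> fwd n (i + int k2) * fwd n (i + int (Suc k2))"
        by (intro mult_nonneg_nonneg less_imp_le fwd_bounds(1)[OF pos])
      have "(\<Prod>j<k. fwd n (i + int j)) \<le> (2 * sqrt (2/3) ^ k2) * (1/2)"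
        unfolding e by (rule mult_mono[OF IH pb _ nn]) simp
      also have "\<dots> \<le> (2 * sqrt (2/3) ^ k2) * (2/3)" by (rule mult_left_mono) auto
      also have "\<dots> = 2 * sqrt (2/3) ^ k"
      proof -
        have "sqrt (2/3) ^ k = sqrt (2/3) ^ k2 * (sqrt (2/3) * sqrt (2/3))"
          unfolding k power_Suc by (simp only: mult.commute mult.left_commute)
        then show ?thesis by simp
      qed
      finally show ?thesis .
    qed
  qed
qed

lemma norm_s: assumes pos: "\<And>i. n i > 0"
  shows "1 \<le> norm (svec n i)" "norm (svec n i) \<le> 2"
proof -
  have x: "0 < fwd n i" "fwd n i \<le> 1" using fwd_bounds[of n i, OF pos] by auto
  have c1: "\<bar>svec n i $1\<bar> \<le> 1" "\<bar>svec n i $2\<bar> \<le> 1" using x by (auto simp: svec_def)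
  have c2: "\<bar>svec n i $1\<bar> = 1 \<or> \<bar>svec n i $2\<bar> = 1" by (auto simp: svec_def)
  show "1 \<le> norm (svec n i)" using c2 component_le_norm_cart[of "svec n i" 1] component_le_norm_cart[of "svec n i" 2]
    by auto
  show "norm (svec n i) \<le> 2" using norm_le_l1_cart[of "svec n i"] c1 by (simp add: sum_2)
qed

lemma norm_u: assumes pos: "\<And>i. n i > 0"
  shows "1/2 \<le> norm (uvec n i)" "norm (uvec n i) \<le> 2"
proof -
  have x: "0 < fwd n i" "fwd n i \<le> 1" using fwd_bounds[of n i, OF pos] by auto
  have y: "0 < bwd n i" "bwd n i \<le> 1" using bwd_bounds[of n i, OF pos] by auto
  define D where "D = 1 + fwd n i * bwd n i"
  have D: "1 \<le> D" "D \<le> 2" unfolding D_def using x y mult_mono[of "fwd n i" 1 "bwd n i" 1] by auto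
  have a: "1/2 \<le> 1/D" "1/D \<le> 1" using D by (auto simp: divide_simps)
  have b: "0 \<le> bwd n i / D" "bwd n i / D \<le> 1" using D y by (auto simp: divide_simps)
  have c1: "\<bar>uvec n i $1\<bar> \<le> 1" "\<bar>uvec n i $2\<bar> \<le> 1" using a b D
    by (auto simp: uvec_def D_def[symmetric])
  have c2: "1/2 \<le> \<bar>uvec n i $1\<bar> \<or> 1/2 \<le> \<bar>uvec n i $2\<bar>" using a D
    by (auto simp: uvec_def D_def[symmetric])
  show "1/2 \<le> norm (uvec n i)" using c2 component_le_norm_cart[of "uvec n i" 1] component_le_norm_cart[of "uvec n i" 2]
    by linarith
  show "norm (uvec n i) \<le> 2" using norm_le_l1_cart[of "uvec n i"] c1 by (simp add: sum_2)
qed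

lemma c_facts: assumes pos: "\<And>i. n i > 0"
  shows "norm (svec n i) / norm (svec n j) \<le> cconst n" "norm (uvec n i) / norm (uvec n j) \<le> cconst n"
proof -
  define S1 where "S1 = {norm (svec n i) / norm (svec n j) | i j. True}"
  define S2 where "S2 = {norm (uvec n i) / norm (uvec n j) | i j. True}"
  have b1: "bdd_above S1" unfolding bdd_above_def S1_def
  proof (intro exI[of _ 2] ballI)
    fix z assume "z \<in> {norm (svec n i) / norm (svec n j) | i j. True}"
    then obtain a b where z: "z = norm (svec n a) / norm (svec n b)" by auto
    have "norm (svec n a) \<le> 2 * norm (svec n b)" using norm_s[of n a, OF pos] norm_s[of n b, OF pos] by linarith
    then show "z \<le> 2" unfolding z using norm_s[of n b, OF pos] by (simp add: divide_le_eq)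
  qed
  have b2: "bdd_above S2" unfolding bdd_above_def S2_def
  proof (intro exI[of _ 4] ballI)
    fix z assume "z \<in> {norm (uvec n i) / norm (uvec n j) | i j. True}"
    then obtain a b where z: "z = norm (uvec n a) / norm (uvec n b)" by auto
    have "norm (uvec n a) \<le> 4 * norm (uvec n b)" using norm_u[of n a, OF pos] norm_u[of n b, OF pos] by linarith
    then show "z \<le> 4" unfolding z using norm_u[of n b, OF pos] by (simp add: divide_le_eq)
  qed
  have "norm (svec n i) / norm (svec n j) \<le> Sup S1" by (rule cSup_upper[OF _ b1]) (auto simp: S1_def)
  then show "norm (svec n i) / norm (svec n j) \<le> cconst n" unfolding cconst_def S1_def by simp
  have "norm (uvec n i) / norm (uvec n j) \<le> Sup S2" by (rule cSup_upper[OF _ b2]) (auto simp: S2_def)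
  then show "norm (uvec n i) / norm (uvec n j) \<le> cconst n" unfolding cconst_def S2_def by simp
qed

lemma c_pos: assumes pos: "\<And>i. n i > 0" shows "1 \<le> cconst n"
  using c_facts(1)[of n 0 0, OF pos] norm_s[of n 0, OF pos] by (simp split: if_splits)

theorem proposition3p5:
  fixes n :: "int \<Rightarrow> nat"
  assumes pos: "\<And>i. n i > 0"
  defines "lam \<equiv> sqrt (2/3)"
  shows "(\<forall>i. (\<exists>t. Amat n i *v svec n i = t *\<^sub>R svec n (i + 1))
            \<and> (\<exists>t. Amat n i *v uvec n i = t *\<^sub>R uvec n (i + 1))
            \<and> independent {svec n i, uvec n i} \<and> svec n i \<noteq> uvec n i)
       \<and> (\<forall>i. \<forall>k::nat. k \<ge> 1 \<longrightarrow>
            norm (Apow n i k *v svec n i) \<le> 2 * cconst n * lam ^ k * norm (svec n i)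
          \<and> norm (Apow n i k *v uvec n i) \<ge> inverse (2 * cconst n) * (1 / lam) ^ k * norm (uvec n i))"
proof (intro conjI allI impI)
  fix i
  show "\<exists>t. Amat n i *v svec n i = t *\<^sub>R svec n (i + 1)" using svec_step[of n, OF pos] by blast
  show "\<exists>t. Amat n i *v uvec n i = t *\<^sub>R uvec n (i + 1)" using uvec_step[of n, OF pos] by blast
  show "independent {svec n i, uvec n i}" by (rule indep2(1)[OF det_su[of n, OF pos]])
  show "svec n i \<noteq> uvec n i" by (rule indep2(2)[OF det_su[of n, OF pos]])
next
  fix i and k :: nat
  define P where "P = (\<Prod>j<k. fwd n (i + int j))"
  define c where "c = cconst n"
  have Pp: "0 < P" unfolding P_def by (rule prod_nonneg_f[of n, OF pos])
  have Pb: "P \<le> 2 * lam ^ k" unfolding P_def lam_def by (rule prod_bound[of n, OF pos])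
  have c1: "1 \<le> c" unfolding c_def by (rule c_pos[of n, OF pos])
  have lp: "0 < lam" unfolding lam_def by simp
  have ns: "norm (svec n (i + int k)) \<le> c * norm (svec n i)"
  proof -
    have np: "norm (svec n i) > 0" using norm_s[of n i, OF pos] by linarith
    show ?thesis using c_facts(1)[of n "i + int k" i, OF pos] unfolding c_def pos_divide_le_eq[OF np] .
  qed
  have "norm (Apow n i k *v svec n i) = P * norm (svec n (i + int k))"
    unfolding Apow_s[of n, OF pos] P_def[symmetric] using Pp by simp
  also have "\<dots> \<le> (2 * lam ^ k) * (c * norm (svec n i))"
    by (rule mult_mono[OF Pb ns]) (use lp in auto)
  also have "\<dots> = 2 * cconst n * lam ^ k * norm (svec n i)" unfolding c_def by simp
  finally show "norm (Apow n i k *v svec n i) \<le> 2 * cconst n * lam ^ k * norm (svec n i)" .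
  have nu: "norm (uvec n i) / c \<le> norm (uvec n (i + int k))"
  proof -
    have np: "norm (uvec n (i + int k)) > 0" using norm_u[of n "i + int k", OF pos] by linarith
    have cp: "c > 0" using c1 by linarith
    have "norm (uvec n i) \<le> c * norm (uvec n (i + int k))"
      using c_facts(2)[of n i "i + int k", OF pos] unfolding c_def pos_divide_le_eq[OF np] .
    then show ?thesis unfolding pos_divide_le_eq[OF cp] by (simp add: mult.commute)
  qed
  have A: "1 / (2 * lam ^ k) \<le> 1 / P" by (rule frac_le) (use Pp Pb in auto)
  have "inverse (2 * cconst n) * (1 / lam) ^ k * norm (uvec n i) = (1 / (2 * lam ^ k)) * (norm (uvec n i) / c)"
    unfolding c_def using lp c1 by (simp add: power_one_over field_simps c_def)
  also have "\<dots> \<le> (1 / P) * norm (uvec n (i + int k))"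
    by (rule mult_mono[OF A nu]) (use Pp c1 in auto)
  also have "\<dots> = norm (Apow n i k *v uvec n i)"
    unfolding Apow_u[of n, OF pos] P_def[symmetric] using Pp by simp
  finally show "inverse (2 * cconst n) * (1 / lam) ^ k * norm (uvec n i) \<le> norm (Apow n i k *v uvec n i)" .
qed

end
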